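(* Let $H\in\mathbb{R}^{n\times d}$ have rank $h$, $\Sigma\in\mathbb{R}^{n\times n}$ symmetric positive definite, $y\in\mathbb{R}^n$, $J\ge2$, and fix an initial ensemble $v_0^{(1)},\dots,v_0^{(J)}\in\mathbb{R}^d$ with empirical covariance $\Gamma_0$. Let $\varepsilon_i^{(j)}$, $i\ge0$, $j=1,\dots,J$, be i.i.d. $\mathcal{N}(0,\Sigma)$ random vectors. Define $C_0=H\Gamma_0H^\top$, $C_{i+1}=\Sigma-\Sigma(C_i+\Sigma)^{-1}\Sigma$, $\widetilde{\mathcal{M}}_i=\Sigma(C_i+\Sigma)^{-1}$, and the idealized misfits $$\tilde\theta_0^{(j)}=Hv_0^{(j)}-y,\qquad \tilde\theta_{i+1}^{(j)}=\widetilde{\mathcal{M}}_i\tilde\theta_i^{(j)}+(I-\widetilde{\mathcal{M}}_i)\varepsilon_i^{(j)}.$$ With $\widetilde{\mathcal{P}},\widetilde{\mathcal{Q}},\widetilde{\mathcal{N}}$ as defined in the context, for every $j=1,\dots,J$: (a) $\mathbb{E}[\|\widetilde{\mathcal{P}}\tilde\theta_i^{(j)}\|]=\mathcal{O}(i^{-1/2})$ as $i\to\infty$; (b) $\widetilde{\mathcal{Q}}\tilde\theta_i^{(j)}=\widetilde{\mathcal{Q}}\tilde\theta_0^{(j)}$ for all $i\ge0$; (c) $\widetilde{\mathcal{N}}\tilde\theta_i^{(j)}=\widetilde{\mathcal{N}}\tilde\theta_0^{(j)}$ for all $i\ge0$.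
   Context: Empirical covariance: $\Gamma_0=\frac1{J-1}\sum_j(v_0^{(j)}-\bar v_0)(v_0^{(j)}-\bar v_0)^\top$, $\bar v_0=\frac1J\sum_jv_0^{(j)}$. Let $r$ be the number of positive eigenvalues of the pencil $C_0\tilde w=\tilde\delta\Sigma\tilde w$. Let $\tilde w_1,\dots,\tilde w_n$ be a basis of $\mathbb{R}^n$ with $\tilde w_k^\top\Sigma\tilde w_l$ equal to $1$ if $k=l$ and $0$ otherwise, such that each $\tilde w_\ell$ is a generalized eigenvector of $(C_i,\Sigma)$ for every $i\ge0$; $\tilde w_1,\dots,\tilde w_r\in\mathsf{Ran}(\Sigma^{-1}H)$ correspond to positive eigenvalues; $\tilde w_{r+1},\dots,\tilde w_h\in\mathsf{Ran}(\Sigma^{-1}H)$ correspond to eigenvalue zero; $\tilde w_{h+1},\dots,\tilde w_n\in\mathsf{Ker}(H^\top)$ correspond to eigenvalue zero. With $\widetilde W=[\tilde w_1,\dots,\tilde w_n]$ and $\widetilde W_{k:l}$ its columns $k$ through $l$, set $\widetilde{\mathcal{P}}=\Sigma\widetilde W_{1:r}\widetilde W_{1:r}^\top$, $\widetilde{\mathcal{Q}}=\Sigma\widetilde W_{r+1:h}\widetilde W_{r+1:h}^\top$, $\widetilde{\mathcal{N}}=\Sigma\widetilde W_{h+1:n}\widetilde W_{h+1:n}^\top$. The expectation is over the perturbations $\varepsilon_i^{(j)}$. *)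

theory Defs
  imports "HOL-Analysis.Analysis" "HOL-Probability.Probability"
begin

definition outer :: "real^'m \<Rightarrow> real^'k \<Rightarrow> real^'k^'m" where
  "outer u v = (\<chi> i l. u $ i * v $ l)"

definition ens_mean :: "nat \<Rightarrow> (nat \<Rightarrow> real^'d) \<Rightarrow> real^'d" where
  "ens_mean J v = (1 / real J) *\<^sub>R (\<Sum>j=1..J. v j)"

definition emp_cov :: "nat \<Rightarrow> (nat \<Rightarrow> real^'d) \<Rightarrow> real^'d^'d" where
  "emp_cov J v = (1 / (real J - 1)) *\<^sub>R
     (\<Sum>j=1..J. outer (v j - ens_mean J v) (v j - ens_mean J v))"

primrec Cseq :: "real^'n^'n \<Rightarrow> real^'n^'n \<Rightarrow> nat \<Rightarrow> real^'n^'n" where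
  "Cseq S C0 0 = C0"
| "Cseq S C0 (Suc i) = S - S ** matrix_inv (Cseq S C0 i + S) ** S"

definition Mseq :: "real^'n^'n \<Rightarrow> real^'n^'n \<Rightarrow> nat \<Rightarrow> real^'n^'n" where
  "Mseq S C0 i = S ** matrix_inv (Cseq S C0 i + S)"

primrec misfit :: "real^'n^'n \<Rightarrow> real^'n^'n \<Rightarrow> real^'n \<Rightarrow> (nat \<Rightarrow> real^'n) \<Rightarrow> nat \<Rightarrow> real^'n" where
  "misfit S C0 t0 e 0 = t0"
| "misfit S C0 t0 e (Suc i) =
     Mseq S C0 i *v misfit S C0 t0 e i + (mat 1 - Mseq S C0 i) *v e i"

definition mvn_centered :: "'w measure \<Rightarrow> real^'n^'n \<Rightarrow> ('w \<Rightarrow> real^'n) \<Rightarrow> bool" where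
  "mvn_centered M S X \<longleftrightarrow> X \<in> borel_measurable M \<and>
     (\<forall>a. a \<noteq> 0 \<longrightarrow>
        distributed M lborel (\<lambda>w. a \<bullet> X w) (normal_density 0 (sqrt (a \<bullet> (S *v a)))))"

definition wproj :: "real^'n^'n \<Rightarrow> (nat \<Rightarrow> real^'n) \<Rightarrow> nat set \<Rightarrow> real^'n^'n" where
  "wproj S w K = S ** (\<Sum>k\<in>K. outer (w k) (w k))"

end

theory Submission
  imports Defs
begin

lemma span_w:
  fixes S :: "real^'n^'n" and w :: "nat \<Rightarrow> real^'n"
  assumes orth: "\<And>k l. k \<in> {1..CARD('n)} \<Longrightarrow> l \<in> {1..CARD('n)} \<Longrightarrow>
                   w k \<bullet> (S *v w l) = (if k = l then 1 else 0)"
    and z: "\<And>k. k \<in> {1..CARD('n)} \<Longrightarrow> w k \<bullet> z = 0"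
  shows "z = 0"
proof -
  define K where "K = {1..CARD('n)}"
  have inj: "inj_on w K"
  proof (rule inj_onI)
    fix k l assume "k \<in> K" "l \<in> K" "w k = w l"
    then show "k = l" using orth[of k k] orth[of k l] unfolding K_def by (auto split: if_splits)
  qed
  have ind: "independent (w ` K)"
  proof (rule independent_if_scalars_zero)
    show "finite (w ` K)" unfolding K_def by simp
  next
    fix f x assume s: "(\<Sum>x\<in>w ` K. f x *\<^sub>R x) = 0" and x: "x \<in> w ` K"
    then obtain l where l: "l \<in> K" "x = w l" by auto
    have "(\<Sum>k\<in>K. f (w k) *\<^sub>R w k) = 0" using s by (simp add: sum.reindex[OF inj])
    then have "(\<Sum>k\<in>K. f (w k) *\<^sub>R w k) \<bullet> (S *v w l) = 0" by simp
    then have "(\<Sum>k\<in>K. f (w k) * (w k \<bullet> (S *v w l))) = 0" by (simp add: inner_sum_left)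
    also have "(\<Sum>k\<in>K. f (w k) * (w k \<bullet> (S *v w l))) = (\<Sum>k\<in>K. if k = l then f (w l) else 0)"
      by (rule sum.cong) (use l in \<open>auto simp: orth K_def\<close>)
    also have "\<dots> = f (w l)" using l unfolding K_def by simp
    finally show "f x = 0" using l by simp
  qed
  have "card (w ` K) = CARD('n)" using card_image[OF inj] unfolding K_def by simp
  then have "UNIV \<subseteq> span (w ` K)"
    by (intro card_ge_dim_independent ind) auto
  then have "z \<in> span (w ` K)" by auto
  have z': "\<And>k. k \<in> K \<Longrightarrow> z \<bullet> w k = 0" using z by (metis K_def inner_commute)
  from \<open>z \<in> span (w ` K)\<close> have "orthogonal z z"
    by (rule orthogonal_to_span) (auto simp: orthogonal_def z')
  then show ?thesis by (simp add: orthogonal_def)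
qed

lemma transpose_add: "transpose (A + B) = transpose A + transpose (B::'a::semiring_1^'n^'m)"
  by (simp add: transpose_def vec_eq_iff)

lemma transpose_diff: "transpose (A - B) = transpose A - transpose (B::'a::ring_1^'n^'m)"
  by (simp add: transpose_def vec_eq_iff)

lemma inv_props:
  fixes A :: "real^'n^'n"
  assumes "invertible A"
  shows "A ** matrix_inv A = mat 1" "matrix_inv A ** A = mat 1"
proof -
  have "\<exists>A'. A ** A' = mat 1 \<and> A' ** A = mat 1" using assms by (simp add: invertible_def)
  then have "A ** matrix_inv A = mat 1 \<and> matrix_inv A ** A = mat 1"
    unfolding matrix_inv_def by (rule someI_ex)
  then show "A ** matrix_inv A = mat 1" "matrix_inv A ** A = mat 1" by auto
qed

lemma inv_cancel:
  fixes A :: "real^'n^'n"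
  assumes "invertible A"
  shows "matrix_inv A *v (A *v x) = x"
  by (simp add: matrix_vector_mul_assoc inv_props[OF assms])

lemma sym_inner:
  fixes A :: "real^'n^'n"
  assumes "transpose A = A"
  shows "x \<bullet> (A *v y) = (A *v x) \<bullet> y"
  by (metis assms dot_lmul_matrix transpose_matrix_vector)

lemma sym_inv:
  fixes A :: "real^'n^'n"
  assumes "invertible A" "transpose A = A"
  shows "transpose (matrix_inv A) = matrix_inv A"
proof -
  have "transpose (matrix_inv A) ** A = mat 1"
    by (metis assms(2) inv_props(1)[OF assms(1)] matrix_transpose_mul transpose_mat)
  then have "transpose (matrix_inv A) ** A ** matrix_inv A = matrix_inv A" by simp
  then show ?thesis by (metis matrix_mul_assoc inv_props(1)[OF assms(1)] matrix_mul_rid)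
qed

lemma inv_crit:
  fixes A S :: "real^'n^'n" and w :: "nat \<Rightarrow> real^'n"
  assumes orth: "\<And>k l. k \<in> {1..CARD('n)} \<Longrightarrow> l \<in> {1..CARD('n)} \<Longrightarrow>
                   w k \<bullet> (S *v w l) = (if k = l then 1 else 0)"
    and S_pd: "\<forall>x. x \<noteq> 0 \<longrightarrow> 0 < x \<bullet> (S *v x)"
    and S_sym: "transpose S = S"
    and A_sym: "transpose A = A"
    and eig: "\<And>k. k \<in> {1..CARD('n)} \<Longrightarrow> A *v w k = c k *\<^sub>R (S *v w k)"
    and c: "\<And>k. k \<in> {1..CARD('n)} \<Longrightarrow> c k \<noteq> 0"
  shows "invertible A"
proof -
  have "\<forall>x. A *v x = 0 \<longrightarrow> x = 0"
  proof (intro allI impI)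
    fix x assume Ax: "A *v x = 0"
    have "S *v x = 0"
    proof (rule span_w[OF orth])
      fix k assume k: "k \<in> {1..CARD('n)}"
      have "0 = w k \<bullet> (A *v x)" by (simp add: Ax)
      also have "\<dots> = (A *v w k) \<bullet> x" by (rule sym_inner[OF A_sym])
      also have "\<dots> = c k * ((S *v w k) \<bullet> x)" by (simp add: eig[OF k])
      also have "(S *v w k) \<bullet> x = w k \<bullet> (S *v x)" by (rule sym_inner[OF S_sym, symmetric])
      finally show "w k \<bullet> (S *v x) = 0" using c[OF k] by simp
    qed (auto)
    then show "x = 0" using S_pd by force
  qed
  then show ?thesis
    using matrix_left_invertible_ker invertible_left_inverse by blast
qed

lemma C_struct:
  fixes S C0 :: "real^'n^'n" and w :: "nat \<Rightarrow> real^'n" and d0 :: "nat \<Rightarrow> real"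
  assumes orth: "\<And>k l. k \<in> {1..CARD('n)} \<Longrightarrow> l \<in> {1..CARD('n)} \<Longrightarrow>
                   w k \<bullet> (S *v w l) = (if k = l then 1 else 0)"
    and S_pd: "\<forall>x. x \<noteq> 0 \<longrightarrow> 0 < x \<bullet> (S *v x)"
    and S_sym: "transpose S = S"
    and C0_sym: "transpose C0 = C0"
    and d0: "\<And>k. k \<in> {1..CARD('n)} \<Longrightarrow> C0 *v w k = d0 k *\<^sub>R (S *v w k)"
    and d0_nn: "\<And>k. k \<in> {1..CARD('n)} \<Longrightarrow> d0 k \<ge> 0"
  shows "transpose (Cseq S C0 i) = Cseq S C0 i \<and> invertible (Cseq S C0 i + S) \<and>
         (\<forall>k\<in>{1..CARD('n)}. Cseq S C0 i *v w k = (d0 k / (1 + real i * d0 k)) *\<^sub>R (S *v w k))"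
proof (induction i)
  case 0
  have inv: "invertible (C0 + S)"
  proof (rule inv_crit[OF orth S_pd S_sym, where c = "\<lambda>k. 1 + d0 k"])
    show "transpose (C0 + S) = C0 + S" by (simp add: transpose_add C0_sym S_sym)
  next
    fix k assume k: "k \<in> {1..CARD('n)}"
    show "(C0 + S) *v w k = (1 + d0 k) *\<^sub>R (S *v w k)"
      by (simp add: matrix_vector_mult_add_rdistrib d0[OF k] algebra_simps)
    show "1 + d0 k \<noteq> 0" using d0_nn[OF k] by simp
  qed
  then show ?case using C0_sym d0 by simp
next
  case (Suc i)
  define C where "C = Cseq S C0 i"
  define A where "A = C + S"
  define e where "e = (\<lambda>k. d0 k / (1 + real i * d0 k))"
  have Csym: "transpose C = C" and Ainv: "invertible A"
    and Ceig: "\<And>k. k \<in> {1..CARD('n)} \<Longrightarrow> C *v w k = e k *\<^sub>R (S *v w k)"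
    using Suc.IH unfolding C_def A_def e_def by auto
  have e_nn: "e k \<ge> 0" if "k \<in> {1..CARD('n)}" for k
    using d0_nn[OF that] unfolding e_def by simp
  have Asym: "transpose A = A" by (simp add: A_def transpose_add Csym S_sym)
  have C'eq: "Cseq S C0 (Suc i) = S - S ** matrix_inv A ** S" by (simp add: C_def A_def)
  have C'sym: "transpose (Cseq S C0 (Suc i)) = Cseq S C0 (Suc i)"
    unfolding C'eq
    by (simp add: transpose_diff matrix_transpose_mul sym_inv[OF Ainv Asym] S_sym matrix_mul_assoc)
  have C'eig: "Cseq S C0 (Suc i) *v w k = (d0 k / (1 + real (Suc i) * d0 k)) *\<^sub>R (S *v w k)"
    if k: "k \<in> {1..CARD('n)}" for k
  proof -
    have Aw: "A *v w k = (1 + e k) *\<^sub>R (S *v w k)"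
      by (simp add: A_def matrix_vector_mult_add_rdistrib Ceig[OF k] algebra_simps)
    have pos: "1 + e k > 0" using e_nn[OF k] by simp
    have Sw: "S *v w k = (1 / (1 + e k)) *\<^sub>R (A *v w k)" using Aw pos by simp
    have "matrix_inv A *v (S *v w k) = (1 / (1 + e k)) *\<^sub>R w k"
      by (simp add: Sw matrix_vector_mult_scaleR inv_cancel[OF Ainv])
    then have "Cseq S C0 (Suc i) *v w k = (1 - 1 / (1 + e k)) *\<^sub>R (S *v w k)"
      unfolding C'eq by (simp add: matrix_vector_mult_diff_rdistrib matrix_vector_mul_assoc[symmetric]
          matrix_vector_mult_scaleR algebra_simps)
    also have "1 - 1 / (1 + e k) = d0 k / (1 + real (Suc i) * d0 k)"
    proof -
      have p1: "1 + real i * d0 k > 0" using d0_nn[OF k] by (simp add: add_pos_nonneg)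
      have p2: "1 + real (Suc i) * d0 k > 0" using d0_nn[OF k] by (simp add: add_pos_nonneg)
      show ?thesis using p1 p2 unfolding e_def by (simp add: field_simps)
    qed
    finally show ?thesis .
  qed
  have inv: "invertible (Cseq S C0 (Suc i) + S)"
  proof (rule inv_crit[OF orth S_pd S_sym, where c = "\<lambda>k. 1 + d0 k / (1 + real (Suc i) * d0 k)"])
    show "transpose (Cseq S C0 (Suc i) + S) = Cseq S C0 (Suc i) + S"
      by (simp only: transpose_add C'sym S_sym)
  next
    fix k assume k: "k \<in> {1..CARD('n)}"
    show "(Cseq S C0 (Suc i) + S) *v w k = (1 + d0 k / (1 + real (Suc i) * d0 k)) *\<^sub>R (S *v w k)"
      by (simp only: matrix_vector_mult_add_rdistrib C'eig[OF k]) (simp add: algebra_simps)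
    show "1 + d0 k / (1 + real (Suc i) * d0 k) \<noteq> 0" using d0_nn[OF k]
      by (metis add_nonneg_nonneg add_pos_nonneg divide_nonneg_nonneg less_numeral_extra(1)
          mult_nonneg_nonneg of_nat_0_le_iff order_less_irrefl zero_le_one)
  qed
  show ?case using C'sym inv C'eig by blast
qed

lemma ar_step:
  fixes n D a s x :: real
  assumes "1 + n * D > 0" "1 + (1 + n) * D > 0"
  shows "(1 + n * D) / (1 + (1 + n) * D) * ((a + D * s) / (1 + n * D)) +
         (x - (1 + n * D) / (1 + (1 + n) * D) * x) = (a + D * (s + x)) / (1 + (1 + n) * D)"
proof -
  have "(1 + n * D) / (1 + (1 + n) * D) * ((a + D * s) / (1 + n * D)) = (a + D * s) / (1 + (1 + n) * D)"
    using assms by simp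
  moreover have "x - (1 + n * D) / (1 + (1 + n) * D) * x = D * x / (1 + (1 + n) * D)"
    using assms by (simp add: field_simps)
  ultimately show ?thesis by (simp add: add_divide_distrib distrib_left)
qed

lemma misfit_coord:
  fixes S C0 :: "real^'n^'n" and w :: "nat \<Rightarrow> real^'n" and d0 :: "nat \<Rightarrow> real"
  assumes orth: "\<And>k l. k \<in> {1..CARD('n)} \<Longrightarrow> l \<in> {1..CARD('n)} \<Longrightarrow>
                   w k \<bullet> (S *v w l) = (if k = l then 1 else 0)"
    and S_pd: "\<forall>x. x \<noteq> 0 \<longrightarrow> 0 < x \<bullet> (S *v x)"
    and S_sym: "transpose S = S"
    and C0_sym: "transpose C0 = C0"
    and d0: "\<And>k. k \<in> {1..CARD('n)} \<Longrightarrow> C0 *v w k = d0 k *\<^sub>R (S *v w k)"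
    and d0_nn: "\<And>k. k \<in> {1..CARD('n)} \<Longrightarrow> d0 k \<ge> 0"
    and k: "k \<in> {1..CARD('n)}"
  shows "w k \<bullet> misfit S C0 t0 e i = (w k \<bullet> t0 + d0 k * (\<Sum>l<i. w k \<bullet> e l)) / (1 + real i * d0 k)"
proof (induction i)
  case 0
  then show ?case by simp
next
  case (Suc i)
  define A where "A = Cseq S C0 i + S"
  define c where "c = (1 + real i * d0 k) / (1 + real (Suc i) * d0 k)"
  have st: "transpose (Cseq S C0 i) = Cseq S C0 i" "invertible A"
     "Cseq S C0 i *v w k = (d0 k / (1 + real i * d0 k)) *\<^sub>R (S *v w k)"
    using C_struct[OF orth S_pd S_sym C0_sym d0 d0_nn, of i] k unfolding A_def by auto
  have p1: "1 + real i * d0 k > 0" using d0_nn[OF k] by (simp add: add_pos_nonneg)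
  have p2: "1 + real (Suc i) * d0 k > 0" using d0_nn[OF k] by (simp add: add_pos_nonneg)
  have Asym: "transpose A = A" by (simp only: A_def transpose_add st(1) S_sym)
  have Aw: "A *v w k = (1 / c) *\<^sub>R (S *v w k)"
  proof -
    have "A *v w k = (1 + d0 k / (1 + real i * d0 k)) *\<^sub>R (S *v w k)"
      unfolding A_def by (simp only: matrix_vector_mult_add_rdistrib st(3)) (simp add: algebra_simps)
    also have "1 + d0 k / (1 + real i * d0 k) = 1 / c"
      using p1 p2 unfolding c_def by (simp add: field_simps)
    finally show ?thesis .
  qed
  have Sw: "S *v w k = c *\<^sub>R (A *v w k)" using Aw p1 p2 unfolding c_def by simp
  have M: "w k \<bullet> (Mseq S C0 i *v v) = c * (w k \<bullet> v)" for v
  proof -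
    have "w k \<bullet> (Mseq S C0 i *v v) = w k \<bullet> (S *v (matrix_inv A *v v))"
      by (simp add: Mseq_def A_def matrix_vector_mul_assoc)
    also have "\<dots> = (S *v w k) \<bullet> (matrix_inv A *v v)" by (rule sym_inner[OF S_sym])
    also have "\<dots> = c * ((A *v w k) \<bullet> (matrix_inv A *v v))" by (simp add: Sw)
    also have "(A *v w k) \<bullet> (matrix_inv A *v v) = w k \<bullet> (A *v (matrix_inv A *v v))"
      by (rule sym_inner[OF Asym, symmetric])
    also have "\<dots> = w k \<bullet> v" by (simp add: matrix_vector_mul_assoc inv_props(1)[OF st(2)])
    finally show ?thesis .
  qed
  have "w k \<bullet> misfit S C0 t0 e (Suc i) = c * (w k \<bullet> misfit S C0 t0 e i) + (w k \<bullet> e i - c * (w k \<bullet> e i))"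
    by (simp add: inner_add_right matrix_vector_mult_diff_rdistrib inner_diff_right M)
  also have "\<dots> = (w k \<bullet> t0 + d0 k * (\<Sum>l<Suc i. w k \<bullet> e l)) / (1 + real (Suc i) * d0 k)"
    unfolding Suc.IH c_def sum.lessThan_Suc using ar_step[of "real i" "d0 k"] p1 p2 by simp
  finally show ?case .
qed

lemma normal_abs_bound:
  fixes \<sigma> :: real
  assumes "0 < \<sigma>"
  shows "(\<integral>\<^sup>+y. ennreal (normal_density 0 \<sigma> y) * ennreal \<bar>y\<bar> \<partial>lborel) \<le> ennreal \<sigma>"
proof -
  have hb: "has_bochner_integral lborel (\<lambda>x. normal_density 0 \<sigma> x * \<bar>x\<bar>) (\<sigma> * sqrt (2 / pi))"
  proof -
    have "has_bochner_integral lborel (\<lambda>x. normal_density 0 \<sigma> x * \<bar>x - 0\<bar>^(2*0+1)) (2^0 * \<sigma>^(2*0+1) * fact 0 * sqrt (2/pi))"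
      using assms by (rule normal_moment_abs_odd)
    then show ?thesis by (simp only: mult_0_right add_0 power_one_right power_0 fact_0 mult_1 mult_1_right diff_zero of_nat_1)
  qed
  have "(\<integral>\<^sup>+y. ennreal (normal_density 0 \<sigma> y) * ennreal \<bar>y\<bar> \<partial>lborel)
      = (\<integral>\<^sup>+y. ennreal (normal_density 0 \<sigma> y * \<bar>y\<bar>) \<partial>lborel)"
    by (simp add: ennreal_mult)
  also have "\<dots> = ennreal (\<sigma> * sqrt (2 / pi))"
    using nn_integral_eq_integral[OF integrable.intros[OF hb]]
      has_bochner_integral_integral_eq[OF hb] by simp
  also have "\<dots> \<le> ennreal \<sigma>"
  proof (rule ennreal_leI)
    have "2 / pi \<le> 1" using pi_gt3 by simp
    then have "sqrt (2 / pi) \<le> 1" by simp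
    then show "\<sigma> * sqrt (2 / pi) \<le> \<sigma>" using assms by (simp add: mult_left_le)
  qed
  finally show ?thesis .
qed

lemma E_abs_sum:
  fixes M :: "'w measure" and eps :: "nat \<Rightarrow> nat \<Rightarrow> 'w \<Rightarrow> real^'n" and S :: "real^'n^'n"
    and a :: "real^'n"
  assumes prob: "prob_space M"
    and indep: "prob_space.indep_vars M (\<lambda>_. borel) (\<lambda>(i, j). eps i j) (UNIV \<times> {1..J})"
    and gauss: "\<And>i j. j \<in> {1..J} \<Longrightarrow> mvn_centered M S (eps i j)"
    and j: "j \<in> {1..J}" and a: "a \<bullet> (S *v a) = 1" and i: "i \<ge> 1"
  shows "(\<integral>\<^sup>+\<omega>. ennreal \<bar>\<Sum>l<i. a \<bullet> eps l j \<omega>\<bar> \<partial>M) \<le> ennreal (sqrt (real i))"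
proof -
  interpret prob_space M by (rule prob)
  define I where "I = {..<i} \<times> {j}"
  have ind: "indep_vars (\<lambda>_. borel) (\<lambda>p \<omega>. (\<lambda>v. a \<bullet> v) ((\<lambda>(i, j). eps i j) p \<omega>)) I"
    by (rule indep_vars_subset[OF indep_vars_compose2[OF indep]]) (use j in \<open>auto simp: I_def\<close>)
  have a0: "a \<noteq> 0" using a by auto
  have dist: "distributed M lborel (\<lambda>\<omega>. (\<lambda>v. a \<bullet> v) ((\<lambda>(i, j). eps i j) p \<omega>)) (normal_density 0 1)"
    if pI: "p \<in> I" for p
  proof -
    obtain l where p: "p = (l, j)" using pI by (auto simp: I_def)
    have "distributed M lborel (\<lambda>w. a \<bullet> eps l j w) (normal_density 0 (sqrt (a \<bullet> (S *v a))))"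
      using gauss[OF j, of l] a0 unfolding mvn_centered_def by blast
    then show ?thesis unfolding p a by simp
  qed
  have "distributed M lborel (\<lambda>x. \<Sum>p\<in>I. (\<lambda>p \<omega>. (\<lambda>v. a \<bullet> v) ((\<lambda>(i, j). eps i j) p \<omega>)) p x)
      (normal_density (\<Sum>p\<in>I. 0) (sqrt (\<Sum>p\<in>I. 1\<^sup>2)))"
    by (rule sum_indep_normal[OF _ _ ind _ dist]) (use i in \<open>auto simp: I_def lessThan_empty_iff\<close>)
  moreover have "(\<lambda>x. \<Sum>p\<in>I. (\<lambda>p \<omega>. (\<lambda>v. a \<bullet> v) ((\<lambda>(i, j). eps i j) p \<omega>)) p x)
     = (\<lambda>\<omega>. \<Sum>l<i. a \<bullet> eps l j \<omega>)"
  proof -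
    have e: "{..<i} \<times> {j} = (\<lambda>l. (l, j)) ` {..<i}" by auto
    have inj: "inj_on (\<lambda>l. (l, j)) {..<i}" by (auto simp: inj_on_def)
    show ?thesis unfolding I_def e by (simp add: sum.reindex[OF inj])
  qed
  moreover have "(\<Sum>p\<in>I. (1::real)\<^sup>2) = real i" by (simp add: I_def)
  ultimately have D: "distributed M lborel (\<lambda>\<omega>. \<Sum>l<i. a \<bullet> eps l j \<omega>) (normal_density 0 (sqrt (real i)))"
    by simp
  have "(\<integral>\<^sup>+\<omega>. ennreal \<bar>\<Sum>l<i. a \<bullet> eps l j \<omega>\<bar> \<partial>M)
      = (\<integral>\<^sup>+y. ennreal (normal_density 0 (sqrt (real i)) y) * ennreal \<bar>y\<bar> \<partial>lborel)"
    by (rule distributed_nn_integral[OF D, of "\<lambda>y. ennreal \<bar>y\<bar>", symmetric]) simp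
  also have "\<dots> \<le> ennreal (sqrt (real i))"
    by (rule normal_abs_bound) (use i in simp)
  finally show ?thesis .
qed

lemma outer_mv: "outer u v *v x = (v \<bullet> x) *\<^sub>R (u::real^'m)"
  for v x :: "real^'k"
  by (auto simp: outer_def matrix_vector_mult_def vec_eq_iff inner_vec_def sum_distrib_left sum_distrib_right mult_ac intro!: sum.cong)

lemma sum_mv: "finite A \<Longrightarrow> (\<Sum>a\<in>A. f a) *v x = (\<Sum>a\<in>A. f a *v (x::real^'k))"
  for f :: "'a \<Rightarrow> real^'k^'m"
  by (induction A rule: finite_induct) (simp_all add: matrix_vector_mult_add_rdistrib)

lemma mv_sum: "finite A \<Longrightarrow> (S::real^'k^'m) *v (\<Sum>a\<in>A. f a) = (\<Sum>a\<in>A. S *v f a)"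
  by (induction A rule: finite_induct) (simp_all add: matrix_vector_right_distrib)

lemma wproj_mv:
  "finite K \<Longrightarrow> wproj S w K *v x = (\<Sum>k\<in>K. (w k \<bullet> x) *\<^sub>R (S *v w k))"
  by (simp add: wproj_def matrix_vector_mul_assoc[symmetric] sum_mv mv_sum outer_mv
      matrix_vector_mult_scaleR)

lemma transpose_zero: "transpose (0::'a::semiring_1^'n^'m) = 0"
  by (simp add: transpose_def vec_eq_iff)

lemma transpose_sum: "finite A \<Longrightarrow> transpose (\<Sum>a\<in>A. f a) = (\<Sum>a\<in>A. transpose (f a :: real^'k^'m))"
  by (induction A rule: finite_induct) (simp_all add: transpose_add transpose_zero)

lemma transpose_outer: "transpose (outer u u) = outer u (u::real^'k)"
  by (simp add: transpose_def outer_def vec_eq_iff mult.commute)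

lemma emp_cov_sym: "transpose (emp_cov J v) = emp_cov J v"
  by (simp add: emp_cov_def transpose_scalar transpose_sum transpose_outer)

lemma C0_sym: "transpose (H ** emp_cov J v ** transpose H) = H ** emp_cov J v ** transpose H"
  by (simp add: matrix_transpose_mul emp_cov_sym matrix_mul_assoc)

lemma ennr_aux:
  fixes a b y :: real
  assumes "0 \<le> a" "0 \<le> b" "0 \<le> y"
  shows "ennreal a + ennreal b * ennreal y = ennreal (a + b * y)"
  using assms by (simp add: ennreal_plus ennreal_mult)

lemma ar_final:
  fixes t d n :: real
  assumes d: "d > 0" and n: "n \<ge> 1"
  shows "\<bar>t\<bar> / (1 + n * d) + d / (1 + n * d) * sqrt n \<le> (\<bar>t\<bar> / d + 1) / sqrt n"
proof -
  define q where "q = sqrt n"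
  have q1: "q \<ge> 1" using n unfolding q_def by simp
  have nq: "n = q * q" using n unfolding q_def by simp
  have qq: "q \<le> q * q" using q1 by (simp add: mult_le_cancel_left1)
  have pos: "1 + q * q * d > 0" using d q1 by (simp add: add_pos_nonneg)
  have "\<bar>t\<bar> / (1 + q * q * d) \<le> \<bar>t\<bar> / (q * d)"
  proof (rule divide_left_mono)
    have "q * d \<le> q * q * d" using qq d by (simp add: mult_right_mono)
    then show "q * d \<le> 1 + q * q * d" by linarith
    show "0 \<le> \<bar>t\<bar>" by simp
    show "0 < (1 + q * q * d) * (q * d)" using pos d q1 by simp
  qed
  also have "\<dots> = (\<bar>t\<bar> / d) / q" using d q1 by simp
  finally have A: "\<bar>t\<bar> / (1 + q * q * d) \<le> (\<bar>t\<bar> / d) / q" .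
  have B: "d / (1 + q * q * d) * q \<le> 1 / q"
  proof -
    have q0: "q > 0" using q1 by simp
    have e: "d / (1 + q * q * d) * q = (d * q * q / (1 + q * q * d)) / q" using q0 by simp
    have l: "d * q * q / (1 + q * q * d) \<le> 1" using pos by (simp add: mult_ac)
    have "(d * q * q / (1 + q * q * d)) / q \<le> 1 / q" using divide_right_mono[OF l, of q] q0 by simp
    then show ?thesis unfolding e .
  qed
  have "\<bar>t\<bar> / (1 + n * d) + d / (1 + n * d) * sqrt n \<le> (\<bar>t\<bar> / d) / q + 1 / q"
  proof -
    have e1: "1 + n * d = 1 + q * q * d" by (simp add: nq)
    have e2: "sqrt n = q" by (simp add: q_def)
    show ?thesis unfolding e1 e2 by (rule add_mono[OF A B])
  qed
  also have "\<dots> = (\<bar>t\<bar> / d + 1) / sqrt n" by (simp add: q_def add_divide_distrib)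
  finally show ?thesis .
qed

theorem theorem4p7:
  fixes H :: "real^'d^'n" and S :: "real^'n^'n" and y :: "real^'n"
    and J :: nat and v0 :: "nat \<Rightarrow> real^'d"
    and M :: "'w measure" and eps :: "nat \<Rightarrow> nat \<Rightarrow> 'w \<Rightarrow> real^'n"
    and w :: "nat \<Rightarrow> real^'n" and r h :: nat
  assumes rankH: "rank H = h"
    and S_sym: "transpose S = S"
    and S_pd: "\<forall>x. x \<noteq> 0 \<longrightarrow> 0 < x \<bullet> (S *v x)"
    and J2: "J \<ge> 2"
    and prob: "prob_space M"
    and indep: "prob_space.indep_vars M (\<lambda>_. borel) (\<lambda>(i, j). eps i j) (UNIV \<times> {1..J})"
    and gauss: "\<And>i j. j \<in> {1..J} \<Longrightarrow> mvn_centered M S (eps i j)"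
    and rh: "r \<le> h" "h \<le> CARD('n)"
    and w_orth: "\<And>k l. k \<in> {1..CARD('n)} \<Longrightarrow> l \<in> {1..CARD('n)} \<Longrightarrow>
                   w k \<bullet> (S *v w l) = (if k = l then 1 else 0)"
    and w_eig: "\<And>k i. k \<in> {1..CARD('n)} \<Longrightarrow>
                   \<exists>\<delta>. Cseq S (H ** emp_cov J v0 ** transpose H) i *v w k = \<delta> *\<^sub>R (S *v w k)"
    and w_pos: "\<And>k. k \<in> {1..r} \<Longrightarrow> \<exists>\<delta>>0.
                   (H ** emp_cov J v0 ** transpose H) *v w k = \<delta> *\<^sub>R (S *v w k)"
    and w_zero: "\<And>k. k \<in> {r+1..CARD('n)} \<Longrightarrow>
                   (H ** emp_cov J v0 ** transpose H) *v w k = 0"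
    and w_ran: "\<And>k. k \<in> {1..h} \<Longrightarrow> w k \<in> range (\<lambda>x. matrix_inv S *v (H *v x))"
    and w_ker: "\<And>k. k \<in> {h+1..CARD('n)} \<Longrightarrow> transpose H *v w k = 0"
  defines "\<theta> \<equiv> (\<lambda>i j \<omega>. misfit S (H ** emp_cov J v0 ** transpose H) (H *v v0 j - y) (\<lambda>l. eps l j \<omega>) i)"
    and "P \<equiv> wproj S w {1..r}"
    and "Q \<equiv> wproj S w {r+1..h}"
    and "N \<equiv> wproj S w {h+1..CARD('n)}"
  shows "\<forall>j\<in>{1..J}.
           (\<exists>c::real. \<forall>\<^sub>F i in sequentially.
               (\<integral>\<^sup>+ \<omega>. ennreal (norm (P *v \<theta> i j \<omega>)) \<partial>M) \<le> ennreal (c / sqrt (real i)))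
         \<and> (\<forall>i. \<forall>\<omega>\<in>space M. Q *v \<theta> i j \<omega> = Q *v \<theta> 0 j \<omega>)
         \<and> (\<forall>i. \<forall>\<omega>\<in>space M. N *v \<theta> i j \<omega> = N *v \<theta> 0 j \<omega>)"
proof (intro ballI)
  fix j assume j: "j \<in> {1..J}"
  interpret P: prob_space M by (rule prob)
  define C0 where "C0 = H ** emp_cov J v0 ** transpose H"
  define d0 where "d0 = (\<lambda>k. w k \<bullet> (C0 *v w k))"
  define t0 where "t0 = H *v v0 j - y"
  have C0s: "transpose C0 = C0" unfolding C0_def by (rule C0_sym)
  have d0eq: "C0 *v w k = d0 k *\<^sub>R (S *v w k)" if k: "k \<in> {1..CARD('n)}" for k
  proof -
    have "\<exists>\<delta>. C0 *v w k = \<delta> *\<^sub>R (S *v w k)"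
    proof (cases "k \<le> r")
      case True then show ?thesis using w_pos[of k] k unfolding C0_def by auto
    next
      case False then have "C0 *v w k = 0" using w_zero[of k] k unfolding C0_def by auto
      then show ?thesis by (intro exI[of _ 0]) simp
    qed
    then obtain \<delta> where \<delta>: "C0 *v w k = \<delta> *\<^sub>R (S *v w k)" by blast
    have "d0 k = \<delta>" using w_orth[OF k k] unfolding d0_def \<delta> by simp
    then show ?thesis using \<delta> by simp
  qed
  have d0pos: "d0 k > 0" if k: "k \<in> {1..r}" for k
  proof -
    obtain \<delta> where \<delta>: "\<delta> > 0" "C0 *v w k = \<delta> *\<^sub>R (S *v w k)"
      using w_pos[OF k] unfolding C0_def by blast
    have k': "k \<in> {1..CARD('n)}" using k rh by auto
    have "d0 k = \<delta>" using w_orth[OF k' k'] unfolding d0_def \<delta>(2) by simp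
    then show ?thesis using \<delta> by simp
  qed
  have d0zero: "d0 k = 0" if k: "k \<in> {r+1..CARD('n)}" for k
    using w_zero[OF k] unfolding d0_def C0_def by simp
  have d0nn: "d0 k \<ge> 0" if k: "k \<in> {1..CARD('n)}" for k
  proof (cases "k \<le> r")
    case True then show ?thesis using d0pos[of k] k by force
  next
    case False then show ?thesis using d0zero[of k] k by force
  qed
  have coord: "w k \<bullet> \<theta> i j \<omega> = (w k \<bullet> t0 + d0 k * (\<Sum>l<i. w k \<bullet> eps l j \<omega>)) / (1 + real i * d0 k)"
    if k: "k \<in> {1..CARD('n)}" for k i \<omega>
    unfolding \<theta>_def C0_def[symmetric] t0_def[symmetric]
    by (rule misfit_coord[OF w_orth S_pd S_sym C0s d0eq d0nn k])
  have const: "w k \<bullet> \<theta> i j \<omega> = w k \<bullet> \<theta> 0 j \<omega>" if k: "k \<in> {r+1..CARD('n)}" for k i \<omega>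
  proof -
    have k': "k \<in> {1..CARD('n)}" using k by auto
    show ?thesis using coord[OF k', of i \<omega>] coord[OF k', of 0 \<omega>] d0zero[OF k] by simp
  qed
  have b: "\<forall>i. \<forall>\<omega>\<in>space M. Q *v \<theta> i j \<omega> = Q *v \<theta> 0 j \<omega>"
  proof (intro allI ballI)
    fix i \<omega>
    have "w k \<bullet> \<theta> i j \<omega> = w k \<bullet> \<theta> 0 j \<omega>" if "k \<in> {r+1..h}" for k
      using const[of k i \<omega>] that rh by auto
    then show "Q *v \<theta> i j \<omega> = Q *v \<theta> 0 j \<omega>"
      unfolding Q_def by (simp add: wproj_mv)
  qed
  have c: "\<forall>i. \<forall>\<omega>\<in>space M. N *v \<theta> i j \<omega> = N *v \<theta> 0 j \<omega>"
  proof (intro allI ballI)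
    fix i \<omega>
    have "w k \<bullet> \<theta> i j \<omega> = w k \<bullet> \<theta> 0 j \<omega>" if "k \<in> {h+1..CARD('n)}" for k
      using const[of k i \<omega>] that rh by auto
    then show "N *v \<theta> i j \<omega> = N *v \<theta> 0 j \<omega>"
      unfolding N_def by (simp add: wproj_mv)
  qed
  have a: "\<exists>c::real. \<forall>\<^sub>F i in sequentially.
               (\<integral>\<^sup>+ \<omega>. ennreal (norm (P *v \<theta> i j \<omega>)) \<partial>M) \<le> ennreal (c / sqrt (real i))"
  proof -
    have meas[measurable]: "\<And>l. eps l j \<in> borel_measurable M"
      using gauss[OF j] unfolding mvn_centered_def by blast
    define A where "A = (\<lambda>k. norm (S *v w k))"
    define Y where "Y = (\<lambda>k i \<omega>. \<Sum>l<i. w k \<bullet> eps l j \<omega>)"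
    define \<alpha> where "\<alpha> = (\<lambda>k i. \<bar>w k \<bullet> t0\<bar> / (1 + real i * d0 k))"
    define \<beta> where "\<beta> = (\<lambda>k i. d0 k / (1 + real i * d0 k))"
    define c where "c = (\<Sum>k\<in>{1..r}. A k * (\<bar>w k \<bullet> t0\<bar> / d0 k + 1))"
    have Ymeas[measurable]: "\<And>k i. Y k i \<in> borel_measurable M" unfolding Y_def by measurable
    have kK: "k \<in> {1..CARD('n)}" if "k \<in> {1..r}" for k using that rh by auto
    have bound: "(\<integral>\<^sup>+ \<omega>. ennreal (norm (P *v \<theta> i j \<omega>)) \<partial>M) \<le> ennreal (c / sqrt (real i))"
      if i: "i \<ge> 1" for i
    proof -
      have pos1: "1 + real i * d0 k > 0" if "k \<in> {1..r}" for k
        using d0pos[OF that] by (simp add: add_pos_nonneg)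
      have pw: "norm (P *v \<theta> i j \<omega>) \<le> (\<Sum>k\<in>{1..r}. A k * \<alpha> k i + A k * \<beta> k i * \<bar>Y k i \<omega>\<bar>)" for \<omega>
      proof -
        have "norm (P *v \<theta> i j \<omega>) = norm (\<Sum>k\<in>{1..r}. (w k \<bullet> \<theta> i j \<omega>) *\<^sub>R (S *v w k))"
          unfolding P_def by (simp add: wproj_mv)
        also have "\<dots> \<le> (\<Sum>k\<in>{1..r}. norm ((w k \<bullet> \<theta> i j \<omega>) *\<^sub>R (S *v w k)))"
          by (rule norm_sum)
        also have "\<dots> \<le> (\<Sum>k\<in>{1..r}. A k * \<alpha> k i + A k * \<beta> k i * \<bar>Y k i \<omega>\<bar>)"
        proof (rule sum_mono)
          fix k assume k: "k \<in> {1..r}"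
          have "\<bar>w k \<bullet> \<theta> i j \<omega>\<bar> = \<bar>w k \<bullet> t0 + d0 k * Y k i \<omega>\<bar> / (1 + real i * d0 k)"
            using coord[OF kK[OF k], of i \<omega>] pos1[OF k] unfolding Y_def by simp
          also have "\<dots> \<le> (\<bar>w k \<bullet> t0\<bar> + d0 k * \<bar>Y k i \<omega>\<bar>) / (1 + real i * d0 k)"
            using pos1[OF k] d0pos[OF k]
            by (intro divide_right_mono) (auto intro: order_trans[OF abs_triangle_ineq] simp: abs_mult)
          also have "\<dots> = \<alpha> k i + \<beta> k i * \<bar>Y k i \<omega>\<bar>"
            unfolding \<alpha>_def \<beta>_def by (simp add: add_divide_distrib)
          finally have "\<bar>w k \<bullet> \<theta> i j \<omega>\<bar> \<le> \<alpha> k i + \<beta> k i * \<bar>Y k i \<omega>\<bar>" .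
          then have "\<bar>w k \<bullet> \<theta> i j \<omega>\<bar> * A k \<le> (\<alpha> k i + \<beta> k i * \<bar>Y k i \<omega>\<bar>) * A k"
            by (rule mult_right_mono) (simp add: A_def)
          then show "norm ((w k \<bullet> \<theta> i j \<omega>) *\<^sub>R (S *v w k)) \<le> A k * \<alpha> k i + A k * \<beta> k i * \<bar>Y k i \<omega>\<bar>"
            by (simp add: A_def algebra_simps)
        qed
        finally show ?thesis .
      qed
      have nnA: "0 \<le> A k * \<alpha> k i" "0 \<le> A k * \<beta> k i" if "k \<in> {1..r}" for k
        using pos1[OF that] d0pos[OF that] unfolding A_def \<alpha>_def \<beta>_def by auto
      have "(\<integral>\<^sup>+ \<omega>. ennreal (norm (P *v \<theta> i j \<omega>)) \<partial>M)
          \<le> (\<integral>\<^sup>+ \<omega>. (\<Sum>k\<in>{1..r}. ennreal (A k * \<alpha> k i) + ennreal (A k * \<beta> k i) * ennreal \<bar>Y k i \<omega>\<bar>) \<partial>M)"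
      proof (rule nn_integral_mono)
        fix \<omega>
        have "ennreal (norm (P *v \<theta> i j \<omega>)) \<le> ennreal (\<Sum>k\<in>{1..r}. A k * \<alpha> k i + A k * \<beta> k i * \<bar>Y k i \<omega>\<bar>)"
          by (rule ennreal_leI[OF pw])
        also have "\<dots> = (\<Sum>k\<in>{1..r}. ennreal (A k * \<alpha> k i) + ennreal (A k * \<beta> k i) * ennreal \<bar>Y k i \<omega>\<bar>)"
        proof -
          have "(\<Sum>k\<in>{1..r}. ennreal (A k * \<alpha> k i) + ennreal (A k * \<beta> k i) * ennreal \<bar>Y k i \<omega>\<bar>)
              = (\<Sum>k\<in>{1..r}. ennreal (A k * \<alpha> k i + A k * \<beta> k i * \<bar>Y k i \<omega>\<bar>))"
            using nnA by (intro sum.cong refl ennr_aux) auto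
          also have "\<dots> = ennreal (\<Sum>k\<in>{1..r}. A k * \<alpha> k i + A k * \<beta> k i * \<bar>Y k i \<omega>\<bar>)"
            using nnA by (intro sum_ennreal) auto
          finally show ?thesis by simp
        qed
        finally show "ennreal (norm (P *v \<theta> i j \<omega>)) \<le> (\<Sum>k\<in>{1..r}. ennreal (A k * \<alpha> k i) + ennreal (A k * \<beta> k i) * ennreal \<bar>Y k i \<omega>\<bar>)" .
      qed
      also have "\<dots> = (\<Sum>k\<in>{1..r}. ennreal (A k * \<alpha> k i) + ennreal (A k * \<beta> k i) * (\<integral>\<^sup>+ \<omega>. ennreal \<bar>Y k i \<omega>\<bar> \<partial>M))"
      proof -
        have "(\<integral>\<^sup>+ \<omega>. (\<Sum>k\<in>{1..r}. ennreal (A k * \<alpha> k i) + ennreal (A k * \<beta> k i) * ennreal \<bar>Y k i \<omega>\<bar>) \<partial>M)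
          = (\<Sum>k\<in>{1..r}. (\<integral>\<^sup>+ \<omega>. ennreal (A k * \<alpha> k i) + ennreal (A k * \<beta> k i) * ennreal \<bar>Y k i \<omega>\<bar> \<partial>M))"
          by (rule nn_integral_sum) measurable
        also have "\<dots> = (\<Sum>k\<in>{1..r}. ennreal (A k * \<alpha> k i) + ennreal (A k * \<beta> k i) * (\<integral>\<^sup>+ \<omega>. ennreal \<bar>Y k i \<omega>\<bar> \<partial>M))"
        proof (rule sum.cong[OF refl])
          fix k
          have "(\<integral>\<^sup>+ \<omega>. ennreal (A k * \<alpha> k i) + ennreal (A k * \<beta> k i) * ennreal \<bar>Y k i \<omega>\<bar> \<partial>M)
              = (\<integral>\<^sup>+ \<omega>. ennreal (A k * \<alpha> k i) \<partial>M) + (\<integral>\<^sup>+ \<omega>. ennreal (A k * \<beta> k i) * ennreal \<bar>Y k i \<omega>\<bar> \<partial>M)"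
            by (rule nn_integral_add) measurable
          also have "(\<integral>\<^sup>+ \<omega>. ennreal (A k * \<beta> k i) * ennreal \<bar>Y k i \<omega>\<bar> \<partial>M)
              = ennreal (A k * \<beta> k i) * (\<integral>\<^sup>+ \<omega>. ennreal \<bar>Y k i \<omega>\<bar> \<partial>M)"
            by (rule nn_integral_cmult) measurable
          also have "(\<integral>\<^sup>+ \<omega>. ennreal (A k * \<alpha> k i) \<partial>M) = ennreal (A k * \<alpha> k i)"
            by (simp add: P.emeasure_space_1)
          finally show "(\<integral>\<^sup>+ \<omega>. ennreal (A k * \<alpha> k i) + ennreal (A k * \<beta> k i) * ennreal \<bar>Y k i \<omega>\<bar> \<partial>M)
              = ennreal (A k * \<alpha> k i) + ennreal (A k * \<beta> k i) * (\<integral>\<^sup>+ \<omega>. ennreal \<bar>Y k i \<omega>\<bar> \<partial>M)" .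
        qed
        finally show ?thesis .
      qed
      also have "\<dots> \<le> (\<Sum>k\<in>{1..r}. ennreal (A k * \<alpha> k i) + ennreal (A k * \<beta> k i) * ennreal (sqrt (real i)))"
      proof (intro sum_mono add_mono order_refl mult_left_mono)
        fix k assume k: "k \<in> {1..r}"
        show "(\<integral>\<^sup>+ \<omega>. ennreal \<bar>Y k i \<omega>\<bar> \<partial>M) \<le> ennreal (sqrt (real i))"
        proof -
          have o: "w k \<bullet> (S *v w k) = 1" using w_orth[OF kK[OF k] kK[OF k]] by simp
          show ?thesis unfolding Y_def by (rule E_abs_sum[OF prob indep gauss j o i])
        qed
      qed simp
      also have "\<dots> = ennreal (\<Sum>k\<in>{1..r}. A k * (\<alpha> k i + \<beta> k i * sqrt (real i)))"
      proof -
        have "(\<Sum>k\<in>{1..r}. ennreal (A k * \<alpha> k i) + ennreal (A k * \<beta> k i) * ennreal (sqrt (real i)))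
            = (\<Sum>k\<in>{1..r}. ennreal (A k * \<alpha> k i + A k * \<beta> k i * sqrt (real i)))"
          using nnA by (intro sum.cong refl ennr_aux) auto
        also have "\<dots> = ennreal (\<Sum>k\<in>{1..r}. A k * \<alpha> k i + A k * \<beta> k i * sqrt (real i))"
          using nnA by (intro sum_ennreal) auto
        finally show ?thesis by (simp add: distrib_left mult.assoc)
      qed
      also have "\<dots> \<le> ennreal (c / sqrt (real i))"
      proof (rule ennreal_leI)
        have "(\<Sum>k\<in>{1..r}. A k * (\<alpha> k i + \<beta> k i * sqrt (real i)))
            \<le> (\<Sum>k\<in>{1..r}. A k * ((\<bar>w k \<bullet> t0\<bar> / d0 k + 1) / sqrt (real i)))"
        proof (rule sum_mono)
          fix k assume k: "k \<in> {1..r}"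
          show "A k * (\<alpha> k i + \<beta> k i * sqrt (real i)) \<le> A k * ((\<bar>w k \<bullet> t0\<bar> / d0 k + 1) / sqrt (real i))"
            unfolding \<alpha>_def \<beta>_def
            by (rule mult_left_mono[OF ar_final[OF d0pos[OF k]]]) (use i in \<open>auto simp: A_def\<close>)
        qed
        also have "\<dots> = c / sqrt (real i)"
          unfolding c_def by (simp add: sum_divide_distrib)
        finally show "(\<Sum>k\<in>{1..r}. A k * (\<alpha> k i + \<beta> k i * sqrt (real i))) \<le> c / sqrt (real i)" .
      qed
      finally show ?thesis .
    qed
    show ?thesis
      by (rule exI[of _ c], rule eventually_sequentiallyI[of 1]) (rule bound)
  qed
  show "(\<exists>c::real. \<forall>\<^sub>F i in sequentially.
               (\<integral>\<^sup>+ \<omega>. ennreal (norm (P *v \<theta> i j \<omega>)) \<partial>M) \<le> ennreal (c / sqrt (real i)))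
         \<and> (\<forall>i. \<forall>\<omega>\<in>space M. Q *v \<theta> i j \<omega> = Q *v \<theta> 0 j \<omega>)
         \<and> (\<forall>i. \<forall>\<omega>\<in>space M. N *v \<theta> i j \<omega> = N *v \<theta> 0 j \<omega>)"
    using a b c by blast
qed

end
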